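(* Consider the online energy harvesting two-hop status update system described in the context, with service times $d>0$ and $\bar d>0$. Under any feasible policy, the number $N(T)$ of updates received by the destination within time $T$ satisfies $$\limsup_{T\to\infty}\frac{N(T)}{T}\le \min\left\{1,\frac{1}{d+\bar d}\right\}\quad\text{almost surely}.$$
   Context: A source sends status updates to a destination through a half-duplex relay. Energy arrives at the source and at the relay according to two independent Poisson processes of unit rate. Each node has an infinite battery, and at time $0$ each battery holds exactly one energy packet. Transmitting one update consumes one energy packet at the transmitting node, and a node may transmit only if its battery holds at least one packet just before the transmission time (energy causality). An update transmitted by the source at time $t_i$ reaches the relay at time $t_i+d$. The relay forwards it at a time $\bar t_i\ge t_i+d$, and it reaches the destination at time $\bar t_i+\bar d$. The source may transmit the next update only at a time $t_{i+1}\ge\bar t_i+\bar d$. A feasible policy is any choice of such transmission times satisfying these constraints. $N(T)$ is the number of indices $i$ with $\bar t_i+\bar d\le T$. *)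

theory Defs
  imports "HOL-Probability.Probability"
begin

text \<open>Energy arrivals at a node form a unit-rate Poisson process, described by its
  interarrival times X 0, X 1, ...: the k-th arrival (k >= 1) occurs at time
  X 0 + ... + X (k-1).\<close>
definition arrivals_before :: "(nat \<Rightarrow> 'a \<Rightarrow> real) \<Rightarrow> 'a \<Rightarrow> real \<Rightarrow> nat" where
  "arrivals_before X \<omega> t = card {k::nat. 1 \<le> k \<and> (\<Sum>j<k. X j \<omega>) < t}"

text \<open>Feasibility of a (possibly finite) schedule with K updates (K = \<infinity> allowed):
  source transmission times ts i, relay transmission times tr i, for indices i < K.
  Each battery holds one packet at time 0; the i-th transmission (counting from 0)
  needs i+1 packets harvested (including the initial one) just before it.\<close>
definition feasible ::
  "real \<Rightarrow> real \<Rightarrow> (nat \<Rightarrow> 'a \<Rightarrow> real) \<Rightarrow> (nat \<Rightarrow> 'a \<Rightarrow> real) \<Rightarrow> 'a \<Rightarrow>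
   enat \<Rightarrow> (nat \<Rightarrow> real) \<Rightarrow> (nat \<Rightarrow> real) \<Rightarrow> bool" where
  "feasible d db X Y \<omega> K ts tr \<longleftrightarrow>
     (0 < K \<longrightarrow> 0 \<le> ts 0) \<and>
     (\<forall>i. enat i < K \<longrightarrow>
        ts i + d \<le> tr i \<and>
        i + 1 \<le> 1 + arrivals_before X \<omega> (ts i) \<and>
        i + 1 \<le> 1 + arrivals_before Y \<omega> (tr i)) \<and>
     (\<forall>i. enat (Suc i) < K \<longrightarrow> tr i + db \<le> ts (Suc i))"

definition delivered :: "real \<Rightarrow> enat \<Rightarrow> (nat \<Rightarrow> real) \<Rightarrow> real \<Rightarrow> nat" where
  "delivered db K tr T = card {i::nat. enat i < K \<and> tr i + db \<le> T}"

end

theory Submission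
  imports Defs
begin

lemma erlang_tail_bound:
  fixes a lam :: real
  assumes a: "0 \<le> a" and lam: "1 \<le> lam"
  shows "erlang_CDF n 1 a \<le> exp (-a) * exp (lam * a) / lam ^ Suc n"
proof -
  define t where "t = (\<lambda>(x::real) i. x ^ i / fact i)"
  have ts: "t x sums exp x" for x
    using exp_converges[of x] by (simp add: t_def divide_inverse mult.commute)
  have sh: "(\<lambda>i. t x (i + Suc n)) sums (exp x - sum (t x) {..<Suc n})" for x
    using sums_iff_shift'[of "t x" "Suc n" "exp x"] ts by simp
  have cdf: "erlang_CDF n 1 a = exp (-a) * (exp a - sum (t a) {..<Suc n})"
    using a unfolding erlang_CDF_def t_def
    by (simp add: lessThan_Suc_atMost sum_distrib_left right_diff_distrib exp_minus field_simps)
  have "exp a - sum (t a) {..<Suc n} = (\<Sum>i. t a (i + Suc n))"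
    using sh[of a] by (simp add: sums_iff)
  also have "\<dots> \<le> (\<Sum>i. t (lam * a) (i + Suc n) / lam ^ Suc n)"
  proof (rule suminf_le)
    fix i
    have "a ^ (i + Suc n) \<le> lam ^ i * a ^ (i + Suc n)"
      using mult_right_mono[OF one_le_power[OF lam, of i] zero_le_power[OF a, of "i + Suc n"]] by simp
    also have "\<dots> = (lam * a) ^ (i + Suc n) / lam ^ Suc n"
      using lam by (simp add: power_mult_distrib power_add field_simps)
    finally have "a ^ (i + Suc n) / fact (i + Suc n) \<le> ((lam * a) ^ (i + Suc n) / lam ^ Suc n) / fact (i + Suc n)"
      by (intro divide_right_mono) auto
    moreover have "((lam * a) ^ (i + Suc n) / lam ^ Suc n) / fact (i + Suc n) = t (lam * a) (i + Suc n) / lam ^ Suc n"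
      unfolding t_def by (simp only: divide_divide_eq_left mult.commute)
    ultimately show "t a (i + Suc n) \<le> t (lam * a) (i + Suc n) / lam ^ Suc n"
      unfolding t_def by simp
  next
    show "summable (\<lambda>i. t a (i + Suc n))" using sh[of a] by (simp add: sums_iff)
    show "summable (\<lambda>i. t (lam * a) (i + Suc n) / lam ^ Suc n)"
      using sh[of "lam*a"] by (intro summable_divide) (simp add: sums_iff)
  qed
  also have "\<dots> = (exp (lam * a) - sum (t (lam * a)) {..<Suc n}) / lam ^ Suc n"
    using sums_divide[OF sh[of "lam*a"], of "lam ^ Suc n"] by (simp add: sums_iff)
  also have "\<dots> \<le> exp (lam * a) / lam ^ Suc n"
  proof -
    have "0 \<le> sum (t (lam * a)) {..<Suc n}"
      using a lam unfolding t_def by (intro sum_nonneg) simp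
    then show ?thesis using lam by (simp add: divide_right_mono)
  qed
  finally have "exp a - sum (t a) {..<Suc n} \<le> exp (lam * a) / lam ^ Suc n" .
  then show ?thesis unfolding cdf
    by (metis exp_gt_zero less_eq_real_def mult_left_mono times_divide_eq_right)
qed

lemma rate_lt1:
  fixes c :: real assumes "0 < c" "c < 1"
  shows "c * exp (1 - c) < 1"
proof -
  have "ln c < c - 1"
    using ln_le_minus_one[of c] ln_eq_minus_one[of c] assms by force
  then have "exp (ln c + (1 - c)) < exp 0" by simp
  then show ?thesis using assms by (simp add: exp_add)
qed

lemma (in prob_space) sum_lower_AE:
  assumes indX: "indep_vars (\<lambda>_. borel) X UNIV"
    and expX: "\<And>k. distributed M lborel (X k) (exponential_density 1)"
    and c: "0 < c" "c < 1"
  shows "AE \<omega> in M. eventually (\<lambda>n. c * real (Suc n) < (\<Sum>j<Suc n. X j \<omega>)) sequentially"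
proof -
  define r where "r = c * exp (1 - c)"
  have r: "0 < r" "r < 1" using rate_lt1 c by (auto simp: r_def)
  have meas[measurable]: "X j \<in> borel_measurable M" for j
    using distributed_measurable[OF expX[of j]] by simp
  define A where "A n = {\<omega> \<in> space M. (\<Sum>j<Suc n. X j \<omega>) \<le> c * real (Suc n)}" for n
  have Asets[measurable]: "A n \<in> events" for n unfolding A_def by measurable
  have dist: "distributed M lborel (\<lambda>\<omega>. \<Sum>j<Suc n. X j \<omega>) (erlang_density n 1)" for n
    using exponential_distributed_sum[of "{..<Suc n}" 1 X, OF _ _ _ expX indep_vars_subset[OF indX]] by (simp add: lessThan_empty_iff)
  have pA: "prob (A n) \<le> r * r ^ n" for n
  proof -
    have "prob (A n) = erlang_CDF n 1 (c * real (Suc n))"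
      unfolding A_def using erlang_distributed_le[OF dist, of "c * real (Suc n)"] c by simp
    also have "\<dots> \<le> exp (-(c * real (Suc n))) * exp ((1/c) * (c * real (Suc n))) / (1/c) ^ Suc n"
      by (rule erlang_tail_bound) (use c in auto)
    also have "\<dots> = r * r ^ n"
    proof -
      have "exp (-(c * real (Suc n))) * exp ((1/c) * (c * real (Suc n))) = exp (real (Suc n) * (1 - c))"
        using c by (simp add: exp_add[symmetric] algebra_simps)
      also have "\<dots> = exp (1 - c) ^ Suc n" by (rule exp_of_nat_mult)
      finally show ?thesis using c
        by (simp add: r_def power_mult_distrib power_one_over field_simps)
    qed
    finally show ?thesis .
  qed
  have summ: "summable (\<lambda>n. measure M (A n))"
  proof (rule summable_comparison_test)
    show "\<exists>N. \<forall>n\<ge>N. norm (measure M (A n)) \<le> r * r ^ n" using pA by simp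
    show "summable (\<lambda>n. r * r ^ n)" using r by (intro summable_mult summable_geometric) simp
  qed
  have "AE \<omega> in M. eventually (\<lambda>n. \<omega> \<in> space M - A n) sequentially"
    by (rule borel_cantelli_AE1) (use summ in \<open>auto simp: emeasure_eq_measure\<close>)
  then show ?thesis
    by (rule AE_mp) (auto intro!: AE_I2 elim!: eventually_mono simp: A_def)
qed

lemma (in prob_space) indep_X_from_pair:
  fixes X Y :: "nat \<Rightarrow> 'a \<Rightarrow> real"
  assumes ind: "indep_vars (\<lambda>_. borel) (\<lambda>(b, k). if b then X k else Y k) (UNIV :: (bool \<times> nat) set)"
  shows "indep_vars (\<lambda>_. borel) X (UNIV::nat set)"
proof -
  define Z where "Z = (\<lambda>(b, k). if b then X k else Y k)"
  have ZT: "Z (True, k) = X k" for k by (simp add: Z_def)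
  define G where "G = (\<lambda>i. {Z i -` A \<inter> space M |A. A \<in> sets (borel :: real measure)})"
  define F where "F = (\<lambda>i. {X i -` A \<inter> space M |A. A \<in> sets (borel :: real measure)})"
  have GF: "G (True, k) = F k" for k by (simp add: G_def F_def ZT)
  have rv: "\<forall>i. random_variable borel (Z i)" and iG: "indep_sets G UNIV"
    using ind unfolding indep_vars_def2 Z_def G_def by auto
  have "indep_sets F UNIV"
    unfolding indep_sets_def
  proof (intro conjI allI impI ballI)
    fix i show "F i \<subseteq> events" using iG GF[of i] unfolding indep_sets_def by blast
  next
    fix J :: "nat set" and A assume J: "J \<subseteq> UNIV" "J \<noteq> {}" "finite J" and A: "A \<in> Pi J F"
    define A' where "A' = (\<lambda>p::bool\<times>nat. A (snd p))"
    have A': "A' \<in> Pi (Pair True ` J) G" using A GF by (auto simp: A'_def)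
    have "prob (\<Inter>j\<in>Pair True ` J. A' j) = (\<Prod>j\<in>Pair True ` J. prob (A' j))"
      using iG J A' unfolding indep_sets_def by (metis empty_is_image finite_imageI subset_UNIV)
    moreover have "(\<Inter>j\<in>Pair True ` J. A' j) = (\<Inter>j\<in>J. A j)" by (auto simp: A'_def)
    moreover have "(\<Prod>j\<in>Pair True ` J. prob (A' j)) = (\<Prod>j\<in>J. prob (A j))"
      by (subst prod.reindex) (auto simp: A'_def inj_on_def)
    ultimately show "prob (\<Inter>j\<in>J. A j) = (\<Prod>j\<in>J. prob (A j))" by simp
  qed
  moreover have "\<forall>i. random_variable borel (X i)" using rv ZT by metis
  ultimately show ?thesis unfolding indep_vars_def2 F_def by auto
qed

lemma ts_lower:
  assumes f: "feasible d db X Y \<omega> K ts tr"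
  shows "enat i < K \<Longrightarrow> real i * (d + db) \<le> ts i"
proof (induction i)
  case 0 then show ?case using f by (auto simp: feasible_def zero_enat_def[symmetric])
next
  case (Suc i)
  have iK: "enat i < K" using Suc.prems by (metis Suc_ile_eq less_imp_le)
  have "ts i + d \<le> tr i" "tr i + db \<le> ts (Suc i)" using f iK Suc.prems by (auto simp: feasible_def)
  with Suc.IH[OF iK] show ?case by (simp add: algebra_simps)
qed

lemma delivered_bound1:
  assumes f: "feasible d db X Y \<omega> K ts tr" and d: "d > 0" "db > 0" and T: "T > 0"
  shows "real (delivered db K tr T) \<le> T / (d + db)"
proof -
  let ?D = "{i. enat i < K \<and> tr i + db \<le> T}"
  have sub: "?D \<subseteq> {..<nat \<lfloor>T / (d + db)\<rfloor>}"
  proof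
    fix i assume i: "i \<in> ?D"
    then have "real i * (d + db) + d + db \<le> T"
      using ts_lower[OF f, of i] f by (auto simp: feasible_def)
    then have "real (Suc i) \<le> T / (d + db)" using d by (simp add: field_simps)
    then have "int (Suc i) \<le> \<lfloor>T / (d + db)\<rfloor>" by (metis le_floor_iff of_int_of_nat_eq)
    then show "i \<in> {..<nat \<lfloor>T / (d + db)\<rfloor>}" by auto
  qed
  have "card ?D \<le> nat \<lfloor>T / (d + db)\<rfloor>" using card_mono[OF _ sub] by simp
  then have "real (card ?D) \<le> real (nat \<lfloor>T / (d + db)\<rfloor>)" by linarith
  also have "\<dots> \<le> T / (d + db)" using d T by (simp add: divide_nonneg_nonneg)
  finally show ?thesis by (simp add: delivered_def)
qed

lemma delivered_bound2:
  fixes X :: "nat \<Rightarrow> 'a \<Rightarrow> real"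
  assumes f: "feasible d db X Y \<omega> K ts tr" and d: "d > 0" "db > 0" and T: "T > 0" and c: "c > 0"
    and hk: "\<forall>k\<ge>k0. 1 \<le> k \<longrightarrow> c * real k < (\<Sum>j<k. X j \<omega>)"
  shows "real (delivered db K tr T) \<le> real k0 + T / c + 2"
proof -
  define F where "F = {k::nat. 1 \<le> k \<and> (\<Sum>j<k. X j \<omega>) < T}"
  have Fsub: "F \<subseteq> {..< k0 + nat \<lceil>T / c\<rceil>}"
  proof
    fix k assume k: "k \<in> F"
    show "k \<in> {..< k0 + nat \<lceil>T / c\<rceil>}"
    proof (cases "k < k0")
      case False
      have k1: "1 \<le> k" and kT: "(\<Sum>j<k. X j \<omega>) < T" using k by (auto simp: F_def)
      have "c * real k < (\<Sum>j<k. X j \<omega>)" using hk k1 False by auto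
      then have "c * real k < T" using kT by linarith
      then have "real k < T / c" using c by (simp add: field_simps)
      then have "int k < \<lceil>T / c\<rceil>" by (simp add: less_ceiling_iff)
      then show ?thesis by auto
    qed simp
  qed
  have finF: "finite F" using finite_subset[OF Fsub] by simp
  have arr: "arrivals_before X \<omega> t \<le> card F" if "t \<le> T" for t
    unfolding arrivals_before_def using that
    by (intro card_mono[OF finF]) (auto simp: F_def)
  let ?D = "{i. enat i < K \<and> tr i + db \<le> T}"
  have sub: "?D \<subseteq> {..card F}"
  proof
    fix i assume i: "i \<in> ?D"
    then have "ts i \<le> T" "i \<le> arrivals_before X \<omega> (ts i)"
      using f d by (auto simp: feasible_def)
    then show "i \<in> {..card F}" using arr by fastforce
  qed
  have "card ?D \<le> Suc (card F)" using card_mono[OF _ sub] by simp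
  also have "\<dots> \<le> Suc (k0 + nat \<lceil>T / c\<rceil>)" using card_mono[OF _ Fsub] by simp
  finally have "real (card ?D) \<le> real k0 + real (nat \<lceil>T / c\<rceil>) + 1" by linarith
  also have "real (nat \<lceil>T / c\<rceil>) \<le> T / c + 1"
  proof -
    have tc: "0 \<le> T / c" using T c by simp
    then have "real (nat \<lceil>T / c\<rceil>) = real_of_int \<lceil>T / c\<rceil>" by simp
    moreover have "real_of_int \<lceil>T / c\<rceil> \<le> T / c + 1" by linarith
    ultimately show ?thesis by simp
  qed
  finally show ?thesis by (simp add: delivered_def)
qed

theorem lemma6:
  fixes M :: "'a measure" and X Y :: "nat \<Rightarrow> 'a \<Rightarrow> real"
    and d db :: real
    and K :: "'a \<Rightarrow> enat" and ts tr :: "'a \<Rightarrow> nat \<Rightarrow> real"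
  assumes "prob_space M"
    and indep: "prob_space.indep_vars M (\<lambda>_. borel)
                  (\<lambda>(b, k). if b then X k else Y k) (UNIV :: (bool \<times> nat) set)"
    and expX: "\<And>k. distributed M lborel (X k) (exponential_density 1)"
    and expY: "\<And>k. distributed M lborel (Y k) (exponential_density 1)"
    and "d > 0" and "db > 0"
    and feas: "AE \<omega> in M. feasible d db X Y \<omega> (K \<omega>) (ts \<omega>) (tr \<omega>)"
  shows "AE \<omega> in M.
           Limsup at_top (\<lambda>T::real. ereal (real (delivered db (K \<omega>) (tr \<omega>) T) / T))
             \<le> ereal (min 1 (1 / (d + db)))"
proof -
  interpret prob_space M by fact
  have d: "d > 0" "db > 0" by fact+
  have indX: "indep_vars (\<lambda>_. borel) X UNIV" by (rule indep_X_from_pair[OF indep])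
  define cc where "cc m = real (m+1) / real (m+2)" for m :: nat
  have cc: "0 < cc m" "cc m < 1" for m by (auto simp: cc_def)
  have "\<forall>m. AE \<omega> in M. eventually (\<lambda>n. cc m * real (Suc n) < (\<Sum>j<Suc n. X j \<omega>)) sequentially"
    using sum_lower_AE[OF indX expX cc] by blast
  then have "AE \<omega> in M. \<forall>m. eventually (\<lambda>n. cc m * real (Suc n) < (\<Sum>j<Suc n. X j \<omega>)) sequentially"
    by (simp add: AE_all_countable)
  with feas show ?thesis
  proof (eventually_elim)
    case (elim \<omega>)
    note H = elim(1) and E = elim(2)
    let ?N = "\<lambda>T. real (delivered db (K \<omega>) (tr \<omega>) T)"
    define mm where "mm = min 1 (1 / (d + db))"
    show ?case unfolding mm_def[symmetric]
    proof (rule Limsup_le_iff[THEN iffD2], intro allI impI)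
      fix y assume y: "ereal mm < y"
      show "\<forall>\<^sub>F T in at_top. ereal (?N T / T) < y"
      proof (cases y)
        case PInf then show ?thesis by simp
      next
        case MInf then show ?thesis using y by simp
      next
        case (real r)
        then have r: "mm < r" using y by simp
        define \<epsilon> where "\<epsilon> = r - mm"
        have \<epsilon>: "\<epsilon> > 0" using r by (simp add: \<epsilon>_def)
        obtain m where m: "inverse (real (Suc m)) < \<epsilon> / 2"
          using reals_Archimedean[of "\<epsilon> / 2"] \<epsilon> by auto
        obtain N where hN: "\<And>n. n \<ge> N \<Longrightarrow> cc m * real (Suc n) < (\<Sum>j<Suc n. X j \<omega>)"
          using E[rule_format, of m] unfolding eventually_sequentially by blast
        have hk: "\<forall>k\<ge>Suc N. 1 \<le> k \<longrightarrow> cc m * real k < (\<Sum>j<k. X j \<omega>)"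
        proof (intro allI impI)
          fix k assume "Suc N \<le> k" "1 \<le> k"
          then obtain n where "k = Suc n" "n \<ge> N" by (metis Suc_le_D Suc_le_mono)
          then show "cc m * real k < (\<Sum>j<k. X j \<omega>)" using hN by simp
        qed
        define T0 where "T0 = 2 * (real (Suc N) + 2) / \<epsilon> + 1"
        have T0: "T0 > 0"
        proof -
          have "0 \<le> 2 * (real (Suc N) + 2) / \<epsilon>" using \<epsilon> by simp
          then show ?thesis unfolding T0_def by linarith
        qed
        show ?thesis unfolding eventually_at_top_linorder
        proof (intro exI[of _ T0] allI impI)
          fix T assume T: "T \<ge> T0"
          then have Tp: "T > 0" using T0 by simp
          have b1: "?N T \<le> T / (d + db)" by (rule delivered_bound1[OF H d Tp])
          have b2: "?N T \<le> real (Suc N) + T / cc m + 2" by (rule delivered_bound2[OF H d Tp cc(1) hk])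
          have "T / cc m = T + T * inverse (real (Suc m))"
            by (simp add: cc_def field_simps)
          also have "T * inverse (real (Suc m)) < T * (\<epsilon> / 2)" using m Tp by simp
          finally have b3: "T / cc m < T + T * (\<epsilon> / 2)" by simp
          have "2 * (real (Suc N) + 2) / \<epsilon> < T" using T by (simp add: T0_def)
          then have b4: "real (Suc N) + 2 < T * (\<epsilon> / 2)" using \<epsilon> by (simp add: field_simps)
          have "?N T < T * (1 + \<epsilon>)" using b2 b3 b4 by (simp add: algebra_simps)
          then have c1: "?N T / T < 1 + \<epsilon>" using Tp by (simp add: field_simps)
          have c2: "?N T / T \<le> 1 / (d + db)" using b1 Tp d by (simp add: field_simps)
          have "?N T / T < r"
          proof (cases "mm = 1")
            case True then show ?thesis using c1 by (simp add: \<epsilon>_def)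
          next
            case False then have "mm = 1 / (d + db)" by (simp add: mm_def min_def split: if_splits)
            then show ?thesis using c2 r by simp
          qed
          then show "ereal (?N T / T) < y" using real by simp
        qed
      qed
    qed
  qed
qed

end
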